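(* Let $G$ be a bipartite graph with vertex classes $(A,B)$ and density $d=d_G(A,B)$, and let $\mathcal A=\{A_i\}_i$ and $\mathcal B=\{B_j\}_j$ be partitions of $A$ and $B$ respectively such that $\mathcal A\cup\mathcal B$ is weak $\epsilon$-regular in the following sense: for every $S\subseteq A$, $T\subseteq B$ with $|S|\ge\epsilon|A|$, $|T|\ge\epsilon|B|$, writing $S_i=S\cap A_i$, $T_j=T\cap B_j$ and $d_{i,j}=d_G(A_i,B_j)$, $$\sum_{i,j}\frac{|S_i||T_j|}{|S||T|}\,\big|d_G(S_i,T_j)-d_{i,j}\big|\le\epsilon .$$ If $|A|,|B|\ge 8/\epsilon^4$, then one can turn $G$ into a bipartite graph $\widetilde G$ on the same vertex classes for which $(A,B)$ is a $2\epsilon$-regular pair, by adding/removing at most $\Delta$ edges between $A$ and $B$, where $$\Delta=\sum_{i,j}|d_{i,j}-d|\,|A_i||B_j| .$$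
   Context: $e_G(X,Y)$ is the number of pairs $(u,v)\in X\times Y$ with $uv\in E(G)$, $d_G(X,Y)=e_G(X,Y)/(|X||Y|)$ (taken as $0$ when $X$ or $Y$ is empty). A pair $(A,B)$ is $\epsilon$-regular if $|d(A,B)-d(A',B')|\le\epsilon$ for all $A'\subseteq A$, $B'\subseteq B$ with $|A'|\ge\epsilon|A|$, $|B'|\ge\epsilon|B|$. *)

theory Defs
  imports Main "HOL-Library.Disjoint_Sets" Complex_Main
begin

(* A bipartite graph with vertex classes A, B is given by its edge set E \<subseteq> A \<times> B;
   (u,v) \<in> E means uv is an edge with u \<in> A, v \<in> B. *)

definition e_G :: "('a \<times> 'a) set \<Rightarrow> 'a set \<Rightarrow> 'a set \<Rightarrow> nat" where
  "e_G E X Y = card {p \<in> X \<times> Y. p \<in> E}"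

definition d_G :: "('a \<times> 'a) set \<Rightarrow> 'a set \<Rightarrow> 'a set \<Rightarrow> real" where
  "d_G E X Y = (if X = {} \<or> Y = {} then 0
                else real (e_G E X Y) / (real (card X) * real (card Y)))"

definition eps_regular :: "('a \<times> 'a) set \<Rightarrow> real \<Rightarrow> 'a set \<Rightarrow> 'a set \<Rightarrow> bool" where
  "eps_regular E \<epsilon> A B \<longleftrightarrow>
     (\<forall>A' B'. A' \<subseteq> A \<and> B' \<subseteq> B \<and> real (card A') \<ge> \<epsilon> * real (card A)
        \<and> real (card B') \<ge> \<epsilon> * real (card B)
        \<longrightarrow> \<bar>d_G E A B - d_G E A' B'\<bar> \<le> \<epsilon>)"

definition weak_regular :: "('a \<times> 'a) set \<Rightarrow> real \<Rightarrow> 'a set \<Rightarrow> 'a set \<Rightarrow> 'a set set \<Rightarrow> 'a set set \<Rightarrow> bool" where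
  "weak_regular E \<epsilon> A B \<A> \<B> \<longleftrightarrow>
     (\<forall>S T. S \<subseteq> A \<and> T \<subseteq> B \<and> real (card S) \<ge> \<epsilon> * real (card A)
        \<and> real (card T) \<ge> \<epsilon> * real (card B) \<longrightarrow>
        (\<Sum>Ai\<in>\<A>. \<Sum>Bj\<in>\<B>.
           real (card (S \<inter> Ai)) * real (card (T \<inter> Bj)) / (real (card S) * real (card T))
           * \<bar>d_G E (S \<inter> Ai) (T \<inter> Bj) - d_G E Ai Bj\<bar>) \<le> \<epsilon>)"

end

theory Submission
  imports Defs "HOL-Probability.Hoeffding" "HOL-Probability.Product_PMF"
begin

lemma blk_alg:
  fixes \<delta> d \<eta> :: real
  assumes "0\<le>\<delta>" "\<delta>\<le>1" "0\<le>d" "d\<le>1" "0\<le>\<eta>" "\<eta>\<le>1"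
  defines "r \<equiv> (if \<delta> > d then (1-\<eta>)*(\<delta>-d)/\<delta> else 0)"
    and "s \<equiv> (if \<delta> < d then (1-\<eta>)*(d-\<delta>)/(1-\<delta>) else 0)"
  shows "s + (1-r-s)*\<delta> - d = \<eta>*(\<delta>-d)" "0 \<le> r" "r \<le> 1" "0 \<le> s" "s \<le> 1" "0 \<le> 1-r-s" "1-r-s \<le> 1"
    "r*\<delta> + s*(1-\<delta>) = (1-\<eta>)*\<bar>\<delta>-d\<bar>"
proof -
  have A: "(1-\<eta>)*(\<delta>-d) \<le> \<delta>" if "\<delta> > d"
  proof -
    have "(1-\<eta>)*(\<delta>-d) \<le> 1*(\<delta>-d)" using assms that by (intro mult_right_mono) auto
    thus ?thesis using assms by simp
  qed
  have B: "(1-\<eta>)*(d-\<delta>) \<le> 1 - \<delta>" if "\<delta> < d"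
  proof -
    have "(1-\<eta>)*(d-\<delta>) \<le> 1*(d-\<delta>)" using assms that by (intro mult_right_mono) auto
    thus ?thesis using assms by simp
  qed
  have r0: "0 \<le> r" unfolding r_def using assms by auto
  have r1: "r \<le> 1" unfolding r_def using A assms by (auto simp: divide_simps)
  have s0: "0 \<le> s" unfolding s_def using assms by auto
  have s1: "s \<le> 1" unfolding s_def using B assms by (auto simp: divide_simps)
  have rs: "r = 0 \<or> s = 0" unfolding r_def s_def by auto
  show "0 \<le> r" "r \<le> 1" "0 \<le> s" "s \<le> 1" by fact+
  show "0 \<le> 1-r-s" "1-r-s \<le> 1" using r0 r1 s0 s1 rs by auto
  show "s + (1-r-s)*\<delta> - d = \<eta>*(\<delta>-d)"
    unfolding r_def s_def using assms by (auto simp: field_simps)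
  show "r*\<delta> + s*(1-\<delta>) = (1-\<eta>)*\<bar>\<delta>-d\<bar>"
    unfolding r_def s_def using assms by (auto simp: field_simps)
qed



lemma hoeff_generic:
  fixes P :: "'p set" and q :: "'p \<Rightarrow> real" and h :: "'p \<Rightarrow> bool \<Rightarrow> real"
  assumes finP: "finite P" and IP: "I \<subseteq> P" and Ine: "I \<noteq> {}"
    and q01: "\<forall>p\<in>P. 0 \<le> q p \<and> q p \<le> 1"
    and h01: "\<forall>p\<in>I. \<forall>b. 0 \<le> h p b \<and> h p b \<le> 1" and t: "t \<ge> 0"
  shows "measure_pmf.prob (Pi_pmf P False (\<lambda>p. bernoulli_pmf (q p)))
     {\<omega>. (\<Sum>p\<in>I. h p (\<omega> p)) \<ge> (\<Sum>p\<in>I. h p True * q p + h p False * (1 - q p)) + t}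
       \<le> exp (-2 * t\<^sup>2 / real (card I))"
  and "measure_pmf.prob (Pi_pmf P False (\<lambda>p. bernoulli_pmf (q p)))
     {\<omega>. \<bar>(\<Sum>p\<in>I. h p (\<omega> p)) - (\<Sum>p\<in>I. h p True * q p + h p False * (1 - q p))\<bar> \<ge> t}
       \<le> 2 * exp (-2 * t\<^sup>2 / real (card I))"
proof -
  define M where "M = Pi_pmf P False (\<lambda>p. bernoulli_pmf (q p))"
  have finI: "finite I" using finP IP finite_subset by blast
  have exp_eq: "measure_pmf.expectation M (\<lambda>\<omega>. h p (\<omega> p)) = h p True * q p + h p False * (1 - q p)"
    if "p \<in> I" for p
  proof -
    have "measure_pmf.expectation M (\<lambda>\<omega>. h p (\<omega> p)) = measure_pmf.expectation (map_pmf (\<lambda>\<omega>. \<omega> p) M) (h p)"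
      by simp
    also have "map_pmf (\<lambda>\<omega>. \<omega> p) M = bernoulli_pmf (q p)"
      unfolding M_def using that IP finP by (subst Pi_pmf_component) auto
    finally show ?thesis using q01 that IP by auto
  qed
  interpret Hoeffding_ineq "measure_pmf M" I "\<lambda>p \<omega>. h p (\<omega> p)" "\<lambda>_. 0" "\<lambda>_. 1"
    "\<Sum>p\<in>I. measure_pmf.expectation M (\<lambda>\<omega>. h p (\<omega> p))"
  proof unfold_locales
    show "finite I" by (rule finI)
    show "prob_space.indep_vars (measure_pmf M) (\<lambda>_. borel) (\<lambda>p \<omega>. h p (\<omega> p)) I"
      unfolding M_def
      by (intro prob_space.indep_vars_compose2[OF _ prob_space.indep_vars_subset[OF _ indep_vars_Pi_pmf[OF finP] IP]])
         (auto simp: measure_pmf.prob_space_axioms)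
    show "AE x in measure_pmf M. h i (x i) \<in> {0..1}" if "i \<in> I" for i
      using h01 that by auto
  qed simp
  have mu: "(\<Sum>p\<in>I. measure_pmf.expectation M (\<lambda>\<omega>. h p (\<omega> p))) = (\<Sum>p\<in>I. h p True * q p + h p False * (1 - q p))"
    using exp_eq by simp
  have pos: "(\<Sum>i\<in>I. ((1::real) - 0)\<^sup>2) > 0" using finI Ine by (simp add: card_gt_0_iff)
  have cI: "(\<Sum>i\<in>I. ((1::real) - 0)\<^sup>2) = real (card I)" by simp
  show "measure_pmf.prob (Pi_pmf P False (\<lambda>p. bernoulli_pmf (q p)))
     {\<omega>. (\<Sum>p\<in>I. h p (\<omega> p)) \<ge> (\<Sum>p\<in>I. h p True * q p + h p False * (1 - q p)) + t}
       \<le> exp (-2 * t\<^sup>2 / real (card I))"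
    using Hoeffding_ineq_ge[OF t pos, unfolded mu cI] unfolding M_def by simp
  show "measure_pmf.prob (Pi_pmf P False (\<lambda>p. bernoulli_pmf (q p)))
     {\<omega>. \<bar>(\<Sum>p\<in>I. h p (\<omega> p)) - (\<Sum>p\<in>I. h p True * q p + h p False * (1 - q p))\<bar> \<ge> t}
       \<le> 2 * exp (-2 * t\<^sup>2 / real (card I))"
    using Hoeffding_ineq_abs_ge[OF t pos, unfolded mu cI] unfolding M_def by simp
qed




lemma e_le: "finite X \<Longrightarrow> finite Y \<Longrightarrow> e_G E X Y \<le> card X * card Y"
proof -
  assume "finite X" "finite Y"
  then have "card {p \<in> X \<times> Y. p \<in> E} \<le> card (X \<times> Y)" by (intro card_mono) auto
  then show ?thesis unfolding e_G_def by (simp add: card_cartesian_product)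
qed

lemma e_eq: "finite X \<Longrightarrow> finite Y \<Longrightarrow> real (e_G E X Y) = d_G E X Y * card X * card Y"
  unfolding d_G_def by (auto simp: e_G_def)

lemma d01: assumes "finite X" "finite Y" shows "0 \<le> d_G E X Y" "d_G E X Y \<le> 1"
proof -
  show "0 \<le> d_G E X Y" unfolding d_G_def by auto
  have "real (e_G E X Y) \<le> real (card X) * real (card Y)" using e_le[OF assms, of E]
    by (metis of_nat_le_iff of_nat_mult)
  then show "d_G E X Y \<le> 1" unfolding d_G_def using assms by (auto simp: divide_simps)
qed

lemma d_ge0: "0 \<le> d_G E X Y" unfolding d_G_def by auto

lemma d_le1: "d_G E X Y \<le> 1"
proof (cases "finite X \<and> finite Y")
  case True then show ?thesis using d01 by blast
next
  case False then have "card X = 0 \<or> card Y = 0" by auto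
  then show ?thesis unfolding d_G_def by auto
qed

lemma sum_part:
  assumes "finite A" "partition_on A P" "S \<subseteq> A"
  shows "sum g S = (\<Sum>X\<in>P. sum g (S \<inter> X))"
proof -
  have fP: "finite P" using assms finite_elements by blast
  have "S = \<Union>((\<lambda>X. S \<inter> X) ` P)" using assms partition_onD1 by fastforce
  hence "sum g S = sum g (\<Union>((\<lambda>X. S \<inter> X) ` P))" by simp
  also have "\<dots> = (\<Sum>X\<in>P. sum g (S \<inter> X))"
  proof (rule sum.UNION_disjoint[OF fP])
    show "\<forall>X\<in>P. finite (S \<inter> X)" using assms finite_subset by blast
    show "\<forall>X\<in>P. \<forall>Y\<in>P. X \<noteq> Y \<longrightarrow> (S \<inter> X) \<inter> (S \<inter> Y) = {}"
      using partition_onD2[OF assms(2)] by (auto simp: disjoint_def)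
  qed
  finally show ?thesis .
qed

locale setting =
  fixes E :: "('a \<times> 'a) set" and A B :: "'a set" and PA PB :: "'a set set" and \<epsilon> :: real
  assumes finA: "finite A" and finB: "finite B" and EAB: "E \<subseteq> A \<times> B"
    and pA: "partition_on A PA" and pB: "partition_on B PB" and eps: "0 < \<epsilon>"
    and wr: "weak_regular E \<epsilon> A B PA PB"
begin

definition "d = d_G E A B"
definition "partA a = (THE X. X \<in> PA \<and> a \<in> X)"
definition "partB b = (THE Y. Y \<in> PB \<and> b \<in> Y)"
definition "rr \<eta> X Y = (if d_G E X Y > d then (1-\<eta>)*(d_G E X Y-d)/d_G E X Y else 0)"
definition "ss \<eta> X Y = (if d_G E X Y < d then (1-\<eta>)*(d-d_G E X Y)/(1-d_G E X Y) else 0)"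
definition "q \<eta> p = (if p \<in> E then 1 - rr \<eta> (partA (fst p)) (partB (snd p))
                     else ss \<eta> (partA (fst p)) (partB (snd p)))"

lemma fPA: "finite PA" using finA pA finite_elements by blast
lemma fPB: "finite PB" using finB pB finite_elements by blast
lemma subA: "X \<in> PA \<Longrightarrow> X \<subseteq> A" using pA partition_onD1 by blast
lemma subB: "Y \<in> PB \<Longrightarrow> Y \<subseteq> B" using pB partition_onD1 by blast
lemma finX: "X \<in> PA \<Longrightarrow> finite X" using subA finA finite_subset by blast
lemma finY: "Y \<in> PB \<Longrightarrow> finite Y" using subB finB finite_subset by blast

lemma partA_eq: assumes "X \<in> PA" "a \<in> X" shows "partA a = X"
  unfolding partA_def
proof (rule the_equality)
  show "X \<in> PA \<and> a \<in> X" using assms by auto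
  fix Y assume "Y \<in> PA \<and> a \<in> Y"
  then show "Y = X" using assms partition_onD2[OF pA] by (auto simp: disjoint_def)
qed

lemma partB_eq: assumes "Y \<in> PB" "b \<in> Y" shows "partB b = Y"
  unfolding partB_def
proof (rule the_equality)
  show "Y \<in> PB \<and> b \<in> Y" using assms by auto
  fix Z assume "Z \<in> PB \<and> b \<in> Z"
  then show "Z = Y" using assms partition_onD2[OF pB] by (auto simp: disjoint_def)
qed

lemma decomp:
  assumes "S \<subseteq> A" "T \<subseteq> B"
  shows "(\<Sum>p\<in>S \<times> T. f p) = (\<Sum>X\<in>PA. \<Sum>Y\<in>PB. \<Sum>p\<in>(S \<inter> X) \<times> (T \<inter> Y). f p)"
proof -
  have "(\<Sum>p\<in>S \<times> T. f p) = (\<Sum>a\<in>S. \<Sum>b\<in>T. f (a,b))"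
    by (simp add: sum.cartesian_product)
  also have "\<dots> = (\<Sum>X\<in>PA. \<Sum>a\<in>S \<inter> X. \<Sum>b\<in>T. f (a,b))"
    by (rule sum_part[OF finA pA assms(1)])
  also have "\<dots> = (\<Sum>X\<in>PA. \<Sum>a\<in>S \<inter> X. \<Sum>Y\<in>PB. \<Sum>b\<in>T \<inter> Y. f (a,b))"
    by (intro sum.cong refl) (rule sum_part[OF finB pB assms(2)])
  also have "\<dots> = (\<Sum>X\<in>PA. \<Sum>Y\<in>PB. \<Sum>a\<in>S \<inter> X. \<Sum>b\<in>T \<inter> Y. f (a,b))"
    by (intro sum.cong refl) (rule sum.swap)
  also have "\<dots> = (\<Sum>X\<in>PA. \<Sum>Y\<in>PB. \<Sum>p\<in>(S \<inter> X) \<times> (T \<inter> Y). f p)"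
    by (simp add: sum.cartesian_product)
  finally show ?thesis .
qed

lemma card_decomp:
  assumes "S \<subseteq> A" "T \<subseteq> B"
  shows "real (card S) * real (card T) = (\<Sum>X\<in>PA. \<Sum>Y\<in>PB. real (card (S \<inter> X)) * real (card (T \<inter> Y)))"
proof -
  have fS: "finite S" "finite T" using assms finA finB finite_subset by auto
  have "real (card S) * real (card T) = (\<Sum>p\<in>S \<times> T. (1::real))" using fS by (simp add: card_cartesian_product)
  also have "\<dots> = (\<Sum>X\<in>PA. \<Sum>Y\<in>PB. \<Sum>p\<in>(S \<inter> X) \<times> (T \<inter> Y). (1::real))" by (rule decomp[OF assms])
  also have "\<dots> = (\<Sum>X\<in>PA. \<Sum>Y\<in>PB. real (card (S \<inter> X)) * real (card (T \<inter> Y)))"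
    by (simp add: card_cartesian_product)
  finally show ?thesis .
qed

lemma sum_ind: "finite K \<Longrightarrow> (\<Sum>p\<in>K. if P p then (1::real) else 0) = real (card {p\<in>K. P p})"
proof -
  assume "finite K"
  moreover have "{p\<in>K. P p} = K \<inter> Collect P" by auto
  ultimately show ?thesis by (simp add: sum.If_cases)
qed

lemma blocksum:
  assumes "S \<subseteq> A" "T \<subseteq> B"
  shows "(\<Sum>p\<in>S \<times> T. G (partA (fst p)) (partB (snd p)) (p \<in> E)) =
    (\<Sum>X\<in>PA. \<Sum>Y\<in>PB. G X Y True * real (e_G E (S \<inter> X) (T \<inter> Y))
        + G X Y False * (real (card (S \<inter> X)) * real (card (T \<inter> Y)) - real (e_G E (S \<inter> X) (T \<inter> Y))))"
proof -
  have fS: "finite S" "finite T" using assms finA finB finite_subset by auto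
  have blk: "(\<Sum>p\<in>(S \<inter> X) \<times> (T \<inter> Y). G (partA (fst p)) (partB (snd p)) (p \<in> E)) =
     G X Y True * real (e_G E (S \<inter> X) (T \<inter> Y))
        + G X Y False * (real (card (S \<inter> X)) * real (card (T \<inter> Y)) - real (e_G E (S \<inter> X) (T \<inter> Y)))"
    if XY: "X \<in> PA" "Y \<in> PB" for X Y
  proof -
    let ?K = "(S \<inter> X) \<times> (T \<inter> Y)"
    have fK: "finite ?K" using fS by auto
    have "(\<Sum>p\<in>?K. G (partA (fst p)) (partB (snd p)) (p \<in> E)) = (\<Sum>p\<in>?K. G X Y (p \<in> E))"
      using partA_eq[OF XY(1)] partB_eq[OF XY(2)] by (intro sum.cong) auto
    also have "\<dots> = (\<Sum>p\<in>?K. G X Y True * (if p \<in> E then 1 else 0) + G X Y False * (1 - (if p \<in> E then 1 else 0)))"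
      by (intro sum.cong) auto
    also have "\<dots> = G X Y True * (\<Sum>p\<in>?K. if p \<in> E then 1 else 0) + G X Y False * (real (card ?K) - (\<Sum>p\<in>?K. if p \<in> E then 1 else 0))"
    proof -
      have "(\<Sum>p\<in>?K. G X Y True * (if p \<in> E then 1 else 0) + G X Y False * (1 - (if p \<in> E then 1 else 0)))
        = G X Y True * (\<Sum>p\<in>?K. if p \<in> E then 1 else 0) + G X Y False * (\<Sum>p\<in>?K. 1 - (if p \<in> E then 1 else 0))"
        by (simp only: sum.distrib sum_distrib_left)
      moreover have "(\<Sum>p\<in>?K. 1 - (if p \<in> E then 1 else 0)) = real (card ?K) - (\<Sum>p\<in>?K. if p \<in> E then (1::real) else 0)"
        by (simp only: sum_subtractf) simp
      ultimately show ?thesis by simp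
    qed
    also have "(\<Sum>p\<in>?K. if p \<in> E then 1 else 0) = real (e_G E (S \<inter> X) (T \<inter> Y))"
      unfolding e_G_def using sum_ind[OF fK, of "\<lambda>p. p \<in> E"] by simp
    finally show ?thesis by (simp add: card_cartesian_product)
  qed
  show ?thesis unfolding decomp[OF assms]
    by (rule sum.cong[OF refl], rule sum.cong[OF refl], rule blk)
qed

end



context setting begin

definition "Delta = (\<Sum>Ai\<in>PA. \<Sum>Bj\<in>PB. \<bar>d_G E Ai Bj - d_G E A B\<bar> * real (card Ai) * real (card Bj))"

lemma d_01: "0 \<le> d" "d \<le> 1" unfolding d_def using d01 finA finB by auto

lemma rs_props:
  assumes "X \<in> PA" "Y \<in> PB" "0 \<le> \<eta>" "\<eta> \<le> 1"
  shows "ss \<eta> X Y + (1 - rr \<eta> X Y - ss \<eta> X Y) * d_G E X Y - d = \<eta> * (d_G E X Y - d)"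
    "0 \<le> 1 - rr \<eta> X Y - ss \<eta> X Y" "1 - rr \<eta> X Y - ss \<eta> X Y \<le> 1"
    "0 \<le> rr \<eta> X Y" "rr \<eta> X Y \<le> 1" "0 \<le> ss \<eta> X Y" "ss \<eta> X Y \<le> 1"
    "rr \<eta> X Y * d_G E X Y + ss \<eta> X Y * (1 - d_G E X Y) = (1 - \<eta>) * \<bar>d_G E X Y - d\<bar>"
  using blk_alg[of "d_G E X Y" d \<eta>] d01[OF finX[OF assms(1)] finY[OF assms(2)], of E] d_01 assms(3,4)
  unfolding rr_def ss_def by auto

lemma q01: "0 \<le> \<eta> \<Longrightarrow> \<eta> \<le> 1 \<Longrightarrow> p \<in> A \<times> B \<Longrightarrow> 0 \<le> q \<eta> p \<and> q \<eta> p \<le> 1"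
proof -
  assume h: "0 \<le> \<eta>" "\<eta> \<le> 1" "p \<in> A \<times> B"
  obtain a b where p: "p = (a,b)" "a \<in> A" "b \<in> B" using h by auto
  obtain X where X: "X \<in> PA" "a \<in> X" using pA p partition_onD1 by blast
  obtain Y where Y: "Y \<in> PB" "b \<in> Y" using pB p partition_onD1 by blast
  show ?thesis using rs_props[OF X(1) Y(1) h(1,2)] partA_eq[OF X] partB_eq[OF Y] p
    unfolding q_def by auto
qed

lemma q_one: "q 1 p = (if p \<in> E then 1 else 0)"
  unfolding q_def rr_def ss_def by simp

lemma KL:
  assumes eta: "0 \<le> \<eta>" "\<eta> \<le> 1" and ST: "S \<subseteq> A" "T \<subseteq> B"
  shows "(\<Sum>p\<in>S \<times> T. q \<eta> p) - d * real (card S) * real (card T) =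
    \<eta> * (\<Sum>X\<in>PA. \<Sum>Y\<in>PB. (d_G E X Y - d) * real (card (S \<inter> X)) * real (card (T \<inter> Y)))
    + (\<Sum>X\<in>PA. \<Sum>Y\<in>PB. (1 - rr \<eta> X Y - ss \<eta> X Y) *
        (real (e_G E (S \<inter> X) (T \<inter> Y)) - d_G E X Y * real (card (S \<inter> X)) * real (card (T \<inter> Y))))"
proof -
  define G where "G X Y b = (if b then 1 - rr \<eta> X Y else ss \<eta> X Y)" for X Y b
  have q_eq: "q \<eta> p = G (partA (fst p)) (partB (snd p)) (p \<in> E)" for p
    unfolding q_def G_def by simp
  have s1: "(\<Sum>p\<in>S \<times> T. q \<eta> p) = (\<Sum>X\<in>PA. \<Sum>Y\<in>PB. G X Y True * real (e_G E (S \<inter> X) (T \<inter> Y))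
        + G X Y False * (real (card (S \<inter> X)) * real (card (T \<inter> Y)) - real (e_G E (S \<inter> X) (T \<inter> Y))))"
    unfolding q_eq by (rule blocksum[OF ST])
  have s2: "d * real (card S) * real (card T) = (\<Sum>X\<in>PA. \<Sum>Y\<in>PB. d * (real (card (S \<inter> X)) * real (card (T \<inter> Y))))"
    by (simp add: mult.assoc card_decomp[OF ST] sum_distrib_left)
  have blk: "G X Y True * real (e_G E (S \<inter> X) (T \<inter> Y))
        + G X Y False * (real (card (S \<inter> X)) * real (card (T \<inter> Y)) - real (e_G E (S \<inter> X) (T \<inter> Y)))
        - d * (real (card (S \<inter> X)) * real (card (T \<inter> Y)))
      = \<eta> * ((d_G E X Y - d) * real (card (S \<inter> X)) * real (card (T \<inter> Y)))
        + (1 - rr \<eta> X Y - ss \<eta> X Y) *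
        (real (e_G E (S \<inter> X) (T \<inter> Y)) - d_G E X Y * real (card (S \<inter> X)) * real (card (T \<inter> Y)))"
    if XY: "X \<in> PA" "Y \<in> PB" for X Y
  proof -
    define r where "r = rr \<eta> X Y"
    define s where "s = ss \<eta> X Y"
    define \<delta> where "\<delta> = d_G E X Y"
    define n where "n = real (card (S \<inter> X)) * real (card (T \<inter> Y))"
    define e where "e = real (e_G E (S \<inter> X) (T \<inter> Y))"
    have key: "\<eta> * (\<delta> - d) = s + (1 - r - s) * \<delta> - d"
      using rs_props(1)[OF XY eta] unfolding r_def s_def \<delta>_def by simp
    have "(1 - r) * e + s * (n - e) - d * n = \<eta> * ((\<delta> - d) * n) + (1 - r - s) * (e - \<delta> * n)"
    proof -
      have "\<eta> * ((\<delta> - d) * n) = (s + (1 - r - s) * \<delta> - d) * n" using key by (simp add: mult.assoc)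
      thus ?thesis by (simp add: algebra_simps)
    qed
    thus ?thesis unfolding G_def r_def s_def \<delta>_def n_def e_def by (simp add: mult.assoc)
  qed
  have "(\<Sum>p\<in>S \<times> T. q \<eta> p) - d * real (card S) * real (card T) =
     (\<Sum>X\<in>PA. \<Sum>Y\<in>PB. \<eta> * ((d_G E X Y - d) * real (card (S \<inter> X)) * real (card (T \<inter> Y)))
        + (1 - rr \<eta> X Y - ss \<eta> X Y) *
        (real (e_G E (S \<inter> X) (T \<inter> Y)) - d_G E X Y * real (card (S \<inter> X)) * real (card (T \<inter> Y))))"
    unfolding s1 s2 sum_subtractf[symmetric]
    by (rule sum.cong[OF refl], rule sum.cong[OF refl], rule blk)
  also have "\<dots> = \<eta> * (\<Sum>X\<in>PA. \<Sum>Y\<in>PB. (d_G E X Y - d) * real (card (S \<inter> X)) * real (card (T \<inter> Y)))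
    + (\<Sum>X\<in>PA. \<Sum>Y\<in>PB. (1 - rr \<eta> X Y - ss \<eta> X Y) *
        (real (e_G E (S \<inter> X) (T \<inter> Y)) - d_G E X Y * real (card (S \<inter> X)) * real (card (T \<inter> Y))))"
    by (simp only: sum.distrib sum_distrib_left)
  finally show ?thesis .
qed

lemma B1:
  assumes ST: "S \<subseteq> A" "T \<subseteq> B" and cS: "real (card S) \<ge> \<epsilon> * real (card A)"
    and cT: "real (card T) \<ge> \<epsilon> * real (card B)" and ne: "S \<noteq> {}" "T \<noteq> {}"
    and c01: "\<And>X Y. X \<in> PA \<Longrightarrow> Y \<in> PB \<Longrightarrow> 0 \<le> c X Y \<and> c X Y \<le> 1"
  shows "\<bar>\<Sum>X\<in>PA. \<Sum>Y\<in>PB. c X Y *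
        (real (e_G E (S \<inter> X) (T \<inter> Y)) - d_G E X Y * real (card (S \<inter> X)) * real (card (T \<inter> Y)))\<bar>
     \<le> \<epsilon> * (real (card S) * real (card T))"
proof -
  have fS: "finite S" "finite T" using ST finA finB finite_subset by auto
  define N where "N = real (card S) * real (card T)"
  have Npos: "N > 0" using fS ne unfolding N_def by (simp add: card_gt_0_iff)
  have wr1: "(\<Sum>X\<in>PA. \<Sum>Y\<in>PB.
           real (card (S \<inter> X)) * real (card (T \<inter> Y)) / N
           * \<bar>d_G E (S \<inter> X) (T \<inter> Y) - d_G E X Y\<bar>) \<le> \<epsilon>"
    using wr ST cS cT unfolding weak_regular_def N_def by blast
  have blk: "\<bar>c X Y * (real (e_G E (S \<inter> X) (T \<inter> Y)) - d_G E X Y * real (card (S \<inter> X)) * real (card (T \<inter> Y)))\<bar>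
      \<le> N * (real (card (S \<inter> X)) * real (card (T \<inter> Y)) / N * \<bar>d_G E (S \<inter> X) (T \<inter> Y) - d_G E X Y\<bar>)"
    if XY: "X \<in> PA" "Y \<in> PB" for X Y
  proof -
    have ee: "real (e_G E (S \<inter> X) (T \<inter> Y)) = d_G E (S \<inter> X) (T \<inter> Y) * real (card (S \<inter> X)) * real (card (T \<inter> Y))"
      using fS by (intro e_eq) auto
    have "\<bar>c X Y * (real (e_G E (S \<inter> X) (T \<inter> Y)) - d_G E X Y * real (card (S \<inter> X)) * real (card (T \<inter> Y)))\<bar>
        \<le> \<bar>real (e_G E (S \<inter> X) (T \<inter> Y)) - d_G E X Y * real (card (S \<inter> X)) * real (card (T \<inter> Y))\<bar>"
      using c01[OF XY] by (simp add: abs_mult mult_left_le_one_le)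
    also have "\<dots> = real (card (S \<inter> X)) * real (card (T \<inter> Y)) * \<bar>d_G E (S \<inter> X) (T \<inter> Y) - d_G E X Y\<bar>"
    proof -
      have "real (e_G E (S \<inter> X) (T \<inter> Y)) - d_G E X Y * real (card (S \<inter> X)) * real (card (T \<inter> Y))
       = (real (card (S \<inter> X)) * real (card (T \<inter> Y))) * (d_G E (S \<inter> X) (T \<inter> Y) - d_G E X Y)"
        unfolding ee by (simp add: algebra_simps)
      then show ?thesis by (simp add: abs_mult)
    qed
    also have "\<dots> = N * (real (card (S \<inter> X)) * real (card (T \<inter> Y)) / N * \<bar>d_G E (S \<inter> X) (T \<inter> Y) - d_G E X Y\<bar>)"
      using Npos by simp
    finally show ?thesis .
  qed
  have "\<bar>\<Sum>X\<in>PA. \<Sum>Y\<in>PB. c X Y *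
        (real (e_G E (S \<inter> X) (T \<inter> Y)) - d_G E X Y * real (card (S \<inter> X)) * real (card (T \<inter> Y)))\<bar>
     \<le> (\<Sum>X\<in>PA. \<Sum>Y\<in>PB. \<bar>c X Y *
        (real (e_G E (S \<inter> X) (T \<inter> Y)) - d_G E X Y * real (card (S \<inter> X)) * real (card (T \<inter> Y)))\<bar>)"
    by (rule order.trans[OF sum_abs], rule sum_mono, rule sum_abs)
  also have "\<dots> \<le> (\<Sum>X\<in>PA. \<Sum>Y\<in>PB. N * (real (card (S \<inter> X)) * real (card (T \<inter> Y)) / N * \<bar>d_G E (S \<inter> X) (T \<inter> Y) - d_G E X Y\<bar>))"
    by (rule sum_mono, rule sum_mono, rule blk)
  also have "\<dots> = N * (\<Sum>X\<in>PA. \<Sum>Y\<in>PB. real (card (S \<inter> X)) * real (card (T \<inter> Y)) / N * \<bar>d_G E (S \<inter> X) (T \<inter> Y) - d_G E X Y\<bar>)"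
    by (simp only: sum_distrib_left)
  also have "\<dots> \<le> N * \<epsilon>" using wr1 Npos by (intro mult_left_mono) auto
  finally show ?thesis unfolding N_def by (simp add: mult.commute)
qed

lemma B2:
  assumes ST: "S \<subseteq> A" "T \<subseteq> B"
  shows "\<bar>\<Sum>X\<in>PA. \<Sum>Y\<in>PB. (d_G E X Y - d) * real (card (S \<inter> X)) * real (card (T \<inter> Y))\<bar>
     \<le> real (card S) * real (card T)"
    "\<bar>\<Sum>X\<in>PA. \<Sum>Y\<in>PB. (d_G E X Y - d) * real (card (S \<inter> X)) * real (card (T \<inter> Y))\<bar> \<le> Delta"
proof -
  have fS: "finite S" "finite T" using ST finA finB finite_subset by auto
  have split: "(\<Sum>X\<in>PA. \<Sum>Y\<in>PB. (d_G E X Y - d) * real (card (S \<inter> X)) * real (card (T \<inter> Y)))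
     = (\<Sum>X\<in>PA. \<Sum>Y\<in>PB. d_G E X Y * (real (card (S \<inter> X)) * real (card (T \<inter> Y))))
       - d * (real (card S) * real (card T))"
    by (simp add: card_decomp[OF ST] sum_distrib_left sum_subtractf algebra_simps)
  have lo: "0 \<le> (\<Sum>X\<in>PA. \<Sum>Y\<in>PB. d_G E X Y * (real (card (S \<inter> X)) * real (card (T \<inter> Y))))"
    by (intro sum_nonneg mult_nonneg_nonneg d_ge0) auto
  have hi: "(\<Sum>X\<in>PA. \<Sum>Y\<in>PB. d_G E X Y * (real (card (S \<inter> X)) * real (card (T \<inter> Y))))
       \<le> (\<Sum>X\<in>PA. \<Sum>Y\<in>PB. 1 * (real (card (S \<inter> X)) * real (card (T \<inter> Y))))"
    by (intro sum_mono mult_right_mono d_le1) auto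
  have dd: "0 \<le> d * (real (card S) * real (card T))" "d * (real (card S) * real (card T)) \<le> 1 * (real (card S) * real (card T))"
    using d_01 by (simp_all add: mult_left_le_one_le)
  have dd2: "d * (real (card S) * real (card T)) \<le> real (card S) * real (card T)" using dd(2) by simp
  show "\<bar>\<Sum>X\<in>PA. \<Sum>Y\<in>PB. (d_G E X Y - d) * real (card (S \<inter> X)) * real (card (T \<inter> Y))\<bar>
     \<le> real (card S) * real (card T)"
    using lo hi dd dd2 unfolding split card_decomp[OF ST] by simp
  have "\<bar>\<Sum>X\<in>PA. \<Sum>Y\<in>PB. (d_G E X Y - d) * real (card (S \<inter> X)) * real (card (T \<inter> Y))\<bar>
    \<le> (\<Sum>X\<in>PA. \<Sum>Y\<in>PB. \<bar>(d_G E X Y - d) * real (card (S \<inter> X)) * real (card (T \<inter> Y))\<bar>)"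
    by (rule order.trans[OF sum_abs], rule sum_mono, rule sum_abs)
  also have "\<dots> \<le> Delta" unfolding Delta_def d_def[symmetric]
  proof (rule sum_mono, rule sum_mono)
    fix X Y assume XY: "X \<in> PA" "Y \<in> PB"
    have "real (card (S \<inter> X)) \<le> real (card X)" using finX[OF XY(1)] by (simp add: card_mono)
    moreover have "real (card (T \<inter> Y)) \<le> real (card Y)" using finY[OF XY(2)] by (simp add: card_mono)
    ultimately show "\<bar>(d_G E X Y - d) * real (card (S \<inter> X)) * real (card (T \<inter> Y))\<bar>
        \<le> \<bar>d_G E X Y - d\<bar> * real (card X) * real (card Y)"
      by (simp add: abs_mult mult_mono)
  qed
  finally show "\<bar>\<Sum>X\<in>PA. \<Sum>Y\<in>PB. (d_G E X Y - d) * real (card (S \<inter> X)) * real (card (T \<inter> Y))\<bar> \<le> Delta" .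
qed

lemma eAB: "real (e_G E A B) = (\<Sum>X\<in>PA. \<Sum>Y\<in>PB. real (e_G E X Y))"
proof -
  have "real (e_G E A B) = (\<Sum>p\<in>A \<times> B. (\<lambda>X Y b. if b then 1 else 0) (partA (fst p)) (partB (snd p)) (p \<in> E))"
    using sum_ind[of "A \<times> B" "\<lambda>p. p \<in> E"] finA finB unfolding e_G_def by simp
  also have "\<dots> = (\<Sum>X\<in>PA. \<Sum>Y\<in>PB. real (e_G E (A \<inter> X) (B \<inter> Y)))"
    by (subst blocksum) auto
  also have "\<dots> = (\<Sum>X\<in>PA. \<Sum>Y\<in>PB. real (e_G E X Y))"
    using subA subB by (intro sum.cong refl) (simp add: Int_absorb1)
  finally show ?thesis .
qed

lemma exactAB: assumes "0 \<le> \<eta>" "\<eta> \<le> 1"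
  shows "(\<Sum>p\<in>A \<times> B. q \<eta> p) = d * real (card A) * real (card B)"
proof -
  have AX: "A \<inter> X = X" if "X \<in> PA" for X using subA[OF that] by auto
  have BY: "B \<inter> Y = Y" if "Y \<in> PB" for Y using subB[OF that] by auto
  have t2: "(\<Sum>X\<in>PA. \<Sum>Y\<in>PB. (1 - rr \<eta> X Y - ss \<eta> X Y) *
        (real (e_G E (A \<inter> X) (B \<inter> Y)) - d_G E X Y * real (card (A \<inter> X)) * real (card (B \<inter> Y)))) = 0"
  proof (intro sum.neutral ballI)
    fix X Y assume XY: "X \<in> PA" "Y \<in> PB"
    show "(1 - rr \<eta> X Y - ss \<eta> X Y) *
        (real (e_G E (A \<inter> X) (B \<inter> Y)) - d_G E X Y * real (card (A \<inter> X)) * real (card (B \<inter> Y))) = 0"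
      using e_eq[OF finX[OF XY(1)] finY[OF XY(2)], of E] AX[OF XY(1)] BY[OF XY(2)] by simp
  qed
  have t1: "(\<Sum>X\<in>PA. \<Sum>Y\<in>PB. (d_G E X Y - d) * real (card (A \<inter> X)) * real (card (B \<inter> Y))) = 0"
  proof -
    have "(\<Sum>X\<in>PA. \<Sum>Y\<in>PB. (d_G E X Y - d) * real (card (A \<inter> X)) * real (card (B \<inter> Y)))
      = (\<Sum>X\<in>PA. \<Sum>Y\<in>PB. real (e_G E X Y)) - d * (\<Sum>X\<in>PA. \<Sum>Y\<in>PB. real (card (A \<inter> X)) * real (card (B \<inter> Y)))"
    proof -
      have "(\<Sum>X\<in>PA. \<Sum>Y\<in>PB. (d_G E X Y - d) * real (card (A \<inter> X)) * real (card (B \<inter> Y)))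
        = (\<Sum>X\<in>PA. \<Sum>Y\<in>PB. real (e_G E X Y) - d * (real (card (A \<inter> X)) * real (card (B \<inter> Y))))"
      proof (rule sum.cong[OF refl], rule sum.cong[OF refl])
        fix X Y assume XY: "X \<in> PA" "Y \<in> PB"
        show "(d_G E X Y - d) * real (card (A \<inter> X)) * real (card (B \<inter> Y)) = real (e_G E X Y) - d * (real (card (A \<inter> X)) * real (card (B \<inter> Y)))"
          using e_eq[OF finX[OF XY(1)] finY[OF XY(2)], of E] AX[OF XY(1)] BY[OF XY(2)] by (simp add: algebra_simps)
      qed
      then show ?thesis by (simp add: sum_distrib_left sum_subtractf)
    qed
    also have "\<dots> = 0" unfolding eAB[symmetric] card_decomp[OF order.refl order.refl, symmetric]
      using e_eq[OF finA finB, of E] unfolding d_def by simp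
    finally show ?thesis .
  qed
  show ?thesis using KL[OF assms order.refl order.refl] t1 t2 by simp
qed

lemma cost_exp: assumes "0 \<le> \<eta>" "\<eta> \<le> 1"
  shows "(\<Sum>p\<in>A \<times> B. (if True \<noteq> (p \<in> E) then 1 else 0) * q \<eta> p + (if False \<noteq> (p \<in> E) then 1 else 0) * (1 - q \<eta> p))
    = (1 - \<eta>) * Delta"
proof -
  define G where "G X Y b = (if b then rr \<eta> X Y else ss \<eta> X Y)" for X Y b
  have "(\<Sum>p\<in>A \<times> B. (if True \<noteq> (p \<in> E) then 1 else 0) * q \<eta> p + (if False \<noteq> (p \<in> E) then 1 else 0) * (1 - q \<eta> p))
     = (\<Sum>p\<in>A \<times> B. G (partA (fst p)) (partB (snd p)) (p \<in> E))"
    unfolding G_def q_def by (intro sum.cong refl) auto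
  also have "\<dots> = (\<Sum>X\<in>PA. \<Sum>Y\<in>PB. G X Y True * real (e_G E (A \<inter> X) (B \<inter> Y))
        + G X Y False * (real (card (A \<inter> X)) * real (card (B \<inter> Y)) - real (e_G E (A \<inter> X) (B \<inter> Y))))"
    by (rule blocksum) auto
  also have "\<dots> = (\<Sum>X\<in>PA. \<Sum>Y\<in>PB. (1 - \<eta>) * (\<bar>d_G E X Y - d_G E A B\<bar> * real (card X) * real (card Y)))"
  proof (rule sum.cong[OF refl], rule sum.cong[OF refl])
    fix X Y assume XY: "X \<in> PA" "Y \<in> PB"
    have AX: "A \<inter> X = X" using subA[OF XY(1)] by auto
    have BY: "B \<inter> Y = Y" using subB[OF XY(2)] by auto
    have ee: "real (e_G E X Y) = d_G E X Y * real (card X) * real (card Y)" using e_eq[OF finX[OF XY(1)] finY[OF XY(2)]] .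
    have "G X Y True * real (e_G E X Y) + G X Y False * (real (card X) * real (card Y) - real (e_G E X Y))
       = (rr \<eta> X Y * d_G E X Y + ss \<eta> X Y * (1 - d_G E X Y)) * (real (card X) * real (card Y))"
      unfolding ee G_def by (simp add: algebra_simps)
    also have "\<dots> = (1 - \<eta>) * (\<bar>d_G E X Y - d_G E A B\<bar> * real (card X) * real (card Y))"
      using rs_props(8)[OF XY assms] unfolding d_def by simp
    finally show "G X Y True * real (e_G E (A \<inter> X) (B \<inter> Y))
        + G X Y False * (real (card (A \<inter> X)) * real (card (B \<inter> Y)) - real (e_G E (A \<inter> X) (B \<inter> Y)))
       = (1 - \<eta>) * (\<bar>d_G E X Y - d_G E A B\<bar> * real (card X) * real (card Y))" unfolding AX BY .
  qed
  also have "\<dots> = (1 - \<eta>) * Delta" unfolding Delta_def by (simp only: sum_distrib_left)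
  finally show ?thesis .
qed

end



lemma exists_good:
  assumes "measure_pmf.prob M X < 1"
  shows "\<exists>\<omega>\<in>set_pmf M. \<omega> \<notin> X"
proof -
  have "measure_pmf.prob M (space (measure_pmf M) - X) = 1 - measure_pmf.prob M X"
    by (rule measure_pmf.prob_compl) simp
  hence "measure_pmf.prob M (UNIV - X) \<noteq> 0" using assms by simp
  hence "set_pmf M \<inter> (UNIV - X) \<noteq> {}" using measure_pmf_zero_iff by blast
  thus ?thesis by blast
qed

lemma numeric:
  fixes \<epsilon> :: real and m n :: nat
  assumes e: "0 < \<epsilon>" "\<epsilon> < 1/2" and m: "real m \<ge> 8 / \<epsilon>^4" and n: "real n \<ge> 8 / \<epsilon>^4"
  shows "real (2^m * 2^n) * (2 * exp (- (\<epsilon>^4 * (real m * real n) / 2))) + exp (- (8 * \<epsilon>^8 * (real m * real n))) < 1"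
proof -
  have e4: "0 < \<epsilon>^4" using e by simp
  have e4le: "\<epsilon>^4 \<le> 1" using e by (simp add: power_le_one)
  have em: "\<epsilon>^4 * real m \<ge> 8" using m e4 by (simp add: field_simps)
  have en: "\<epsilon>^4 * real n \<ge> 8" using n e4 by (simp add: field_simps)
  have "\<epsilon>^4 * real m \<le> 1 * real m" using e4le by (intro mult_right_mono) auto
  hence m8: "real m \<ge> 8" using em by linarith
  have "\<epsilon>^4 * real n \<le> 1 * real n" using e4le by (intro mult_right_mono) auto
  hence n8: "real n \<ge> 8" using en by linarith
  have X: "\<epsilon>^4 * (real m * real n) / 2 \<ge> 2 * (real m + real n)"
  proof -
    have "\<epsilon>^4 * (real m * real n) = (\<epsilon>^4 * real m) * real n" by simp
    also have "\<dots> \<ge> 8 * real n" using em by (intro mult_right_mono) auto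
    finally have a: "\<epsilon>^4 * (real m * real n) \<ge> 8 * real n" .
    have "\<epsilon>^4 * (real m * real n) = (\<epsilon>^4 * real n) * real m" by simp
    also have "\<dots> \<ge> 8 * real m" using en by (intro mult_right_mono) auto
    finally have b: "\<epsilon>^4 * (real m * real n) \<ge> 8 * real m" .
    define Z where "Z = \<epsilon>^4 * (real m * real n)"
    have lin: "4*(x+y) \<le> Z" if "8*y \<le> Z" "8*x \<le> Z" for Z x y :: real using that by simp
    from lin[OF a b] have "4 * (real m + real n) \<le> Z" unfolding Z_def .
    thus ?thesis unfolding Z_def[symmetric] by linarith
  qed
  have p2: "real (2^m * 2^n) \<le> exp (real m + real n)"
  proof -
    have "real (2^m * 2^n) = (2::real) ^ (m + n)" by (simp add: power_add)
    also have "\<dots> \<le> exp 1 ^ (m + n)"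
      using exp_ge_add_one_self[of 1] by (intro power_mono) auto
    also have "\<dots> = exp (real (m + n) * 1)" by (rule exp_of_nat_mult[symmetric])
    finally show ?thesis by simp
  qed
  have t1: "real (2^m * 2^n) * (2 * exp (- (\<epsilon>^4 * (real m * real n) / 2))) \<le> exp (real m + real n) * (2 * exp (- (2 * (real m + real n))))"
    using p2 X by (intro mult_mono) auto
  also have "\<dots> = 2 * exp (- (real m + real n))" unfolding mult.left_commute[of "exp (real m + real n)"] mult_exp_exp by simp
  also have "\<dots> \<le> 2 * exp (-3)" using m8 n8 by simp
  also have "\<dots> \<le> 2 * (1/4)"
  proof -
    have "exp (3::real) \<ge> 4" using exp_ge_add_one_self[of 3] by simp
    hence "exp (-3::real) \<le> 1/4" by (simp add: exp_minus field_simps)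
    thus ?thesis by simp
  qed
  finally have T1: "real (2^m * 2^n) * (2 * exp (- (\<epsilon>^4 * (real m * real n) / 2))) \<le> 1/2" by simp
  have "\<epsilon>^8 * (real m * real n) = (\<epsilon>^4 * real m) * (\<epsilon>^4 * real n)" by (simp add: algebra_simps power_add[symmetric])
  also have "\<dots> \<ge> 8 * 8" using em en by (intro mult_mono) auto
  finally have W: "\<epsilon>^8 * (real m * real n) \<ge> 64" by simp
  have "8 * \<epsilon>^8 * (real m * real n) \<ge> 2"
  proof -
    have "8 * \<epsilon>^8 * (real m * real n) = 8 * (\<epsilon>^8 * (real m * real n))" by simp
    thus ?thesis using W by linarith
  qed
  hence "exp (- (8 * \<epsilon>^8 * (real m * real n))) \<le> exp (-2)" by simp
  also have "\<dots> \<le> 1/3"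
  proof -
    have "exp (2::real) \<ge> 3" using exp_ge_add_one_self[of 2] by simp
    thus ?thesis by (simp add: exp_minus field_simps)
  qed
  finally show ?thesis using T1 by simp
qed

lemma absdiv: fixes x d c n :: real
  assumes "n > 0" "\<bar>x - d * n\<bar> \<le> c * n" shows "\<bar>x / n - d\<bar> \<le> c"
proof -
  have "x / n - d = (x - d * n) / n" using assms(1) by (simp add: field_simps)
  hence "\<bar>x / n - d\<bar> = \<bar>x - d * n\<bar> / n" using assms(1) by simp
  also have "\<dots> \<le> c * n / n" using assms by (intro divide_right_mono) auto
  finally show ?thesis using assms(1) by simp
qed




context setting begin

lemma dev_bound:
  assumes eta: "0 \<le> \<eta>" "\<eta> \<le> 1" and ST: "S \<subseteq> A" "T \<subseteq> B"
    and cS: "real (card S) \<ge> \<epsilon> * real (card A)" and cT: "real (card T) \<ge> \<epsilon> * real (card B)"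
    and ne: "S \<noteq> {}" "T \<noteq> {}"
  shows "\<bar>(\<Sum>p\<in>S \<times> T. q \<eta> p) - d * real (card S) * real (card T)\<bar> \<le> (\<eta> + \<epsilon>) * (real (card S) * real (card T))"
    and "\<bar>(\<Sum>p\<in>S \<times> T. q \<eta> p) - d * real (card S) * real (card T)\<bar> \<le> \<eta> * Delta + \<epsilon> * (real (card S) * real (card T))"
proof -
  define t1 where "t1 = (\<Sum>X\<in>PA. \<Sum>Y\<in>PB. (d_G E X Y - d) * real (card (S \<inter> X)) * real (card (T \<inter> Y)))"
  define t2 where "t2 = (\<Sum>X\<in>PA. \<Sum>Y\<in>PB. (1 - rr \<eta> X Y - ss \<eta> X Y) *
        (real (e_G E (S \<inter> X) (T \<inter> Y)) - d_G E X Y * real (card (S \<inter> X)) * real (card (T \<inter> Y))))"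
  have kl: "(\<Sum>p\<in>S \<times> T. q \<eta> p) - d * real (card S) * real (card T) = \<eta> * t1 + t2"
    unfolding t1_def t2_def by (rule KL[OF eta ST])
  have b2: "\<bar>t2\<bar> \<le> \<epsilon> * (real (card S) * real (card T))"
    unfolding t2_def by (rule B1[OF ST cS cT ne]) (use rs_props[OF _ _ eta] in auto)
  have b1: "\<bar>t1\<bar> \<le> real (card S) * real (card T)" "\<bar>t1\<bar> \<le> Delta"
    unfolding t1_def by (rule B2[OF ST])+
  have "\<bar>\<eta> * t1 + t2\<bar> \<le> \<eta> * \<bar>t1\<bar> + \<bar>t2\<bar>" using eta by (simp add: abs_mult abs_triangle_ineq[THEN order.trans])
  moreover have "\<eta> * \<bar>t1\<bar> \<le> \<eta> * (real (card S) * real (card T))" "\<eta> * \<bar>t1\<bar> \<le> \<eta> * Delta"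
    using b1 eta by (auto intro: mult_left_mono)
  ultimately show "\<bar>(\<Sum>p\<in>S \<times> T. q \<eta> p) - d * real (card S) * real (card T)\<bar> \<le> (\<eta> + \<epsilon>) * (real (card S) * real (card T))"
    and "\<bar>(\<Sum>p\<in>S \<times> T. q \<eta> p) - d * real (card S) * real (card T)\<bar> \<le> \<eta> * Delta + \<epsilon> * (real (card S) * real (card T))"
    unfolding kl using b2 by (auto simp: algebra_simps)
qed

lemma Delta_ge0: "0 \<le> Delta" unfolding Delta_def by (intro sum_nonneg) auto

lemma dG_div: "S \<noteq> {} \<Longrightarrow> T \<noteq> {} \<Longrightarrow> d_G E' S T = real (e_G E' S T) / (real (card S) * real (card T))"
  unfolding d_G_def by simp

lemma card_prod_ge:
  assumes "real (card S) \<ge> 2 * \<epsilon> * real (card A)" "real (card T) \<ge> 2 * \<epsilon> * real (card B)"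
  shows "real (card S) * real (card T) \<ge> 4 * \<epsilon>^2 * (real (card A) * real (card B))"
proof -
  have "(2 * \<epsilon> * real (card A)) * (2 * \<epsilon> * real (card B)) \<le> real (card S) * real (card T)"
    using assms eps by (intro mult_mono) auto
  thus ?thesis by (simp add: power2_eq_square algebra_simps)
qed

lemma main:
  assumes cA: "real (card A) \<ge> 8 / \<epsilon> ^ 4" and cB: "real (card B) \<ge> 8 / \<epsilon> ^ 4"
  shows "\<exists>E'. E' \<subseteq> A \<times> B \<and> eps_regular E' (2 * \<epsilon>) A B \<and> real (card ((E - E') \<union> (E' - E))) \<le> Delta"
proof -
  define N where "N = real (card A) * real (card B)"
  have cApos: "real (card A) > 0" using cA eps by (smt (verit) divide_pos_pos zero_less_power)
  have cBpos: "real (card B) > 0" using cB eps by (smt (verit) divide_pos_pos zero_less_power)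
  have Npos: "N > 0" unfolding N_def using cApos cBpos by simp
  have neS: "S \<noteq> {}" if "real (card S) \<ge> 2 * \<epsilon> * real (card A)" for S
  proof -
    have "2 * \<epsilon> * real (card A) > 0" using eps cApos by simp
    thus ?thesis using that by (cases "S = {}") auto
  qed
  have neT: "T \<noteq> {}" if "real (card T) \<ge> 2 * \<epsilon> * real (card B)" for T
  proof -
    have "2 * \<epsilon> * real (card B) > 0" using eps cBpos by simp
    thus ?thesis using that by (cases "T = {}") auto
  qed
  have half: "\<epsilon> * real (card X) \<le> 2 * \<epsilon> * real (card X)" for X using eps by simp
  consider (triv) "\<epsilon> \<ge> 1/2" | (small) "\<epsilon> < 1/2" "Delta \<le> 4 * \<epsilon>^3 * N" | (big) "\<epsilon> < 1/2" "Delta > 4 * \<epsilon>^3 * N"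
    by linarith
  then show ?thesis
  proof cases
    case triv
    have "eps_regular E (2 * \<epsilon>) A B"
      unfolding eps_regular_def
    proof (intro allI impI)
      fix A' B'
      have "\<bar>d_G E A B - d_G E A' B'\<bar> \<le> 1" using d_ge0[of E A B] d_le1[of E A B] d_ge0[of E A' B'] d_le1[of E A' B'] by linarith
      thus "\<bar>d_G E A B - d_G E A' B'\<bar> \<le> 2 * \<epsilon>" using triv by linarith
    qed
    thus ?thesis using EAB Delta_ge0 by (intro exI[of _ E]) auto
  next
    case small
    have "eps_regular E (2 * \<epsilon>) A B"
      unfolding eps_regular_def
    proof (intro allI impI)
      fix A' B'
      assume h: "A' \<subseteq> A \<and> B' \<subseteq> B \<and> 2 * \<epsilon> * real (card A) \<le> real (card A') \<and> 2 * \<epsilon> * real (card B) \<le> real (card B')"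
      have ne: "A' \<noteq> {}" "B' \<noteq> {}" using h neS neT by auto
      have fin: "finite A'" "finite B'" using h finA finB finite_subset by auto
      define n where "n = real (card A') * real (card B')"
      have npos: "n > 0" unfolding n_def using ne fin by (simp add: card_gt_0_iff)
      have nge: "n \<ge> 4 * \<epsilon>^2 * N" unfolding n_def N_def using h by (intro card_prod_ge) auto
      have sq: "(\<Sum>p\<in>A' \<times> B'. q 1 p) = real (e_G E A' B')"
        unfolding q_one e_G_def using sum_ind[of "A' \<times> B'" "\<lambda>p. p \<in> E"] fin by simp
      have db: "\<bar>real (e_G E A' B') - d * real (card A') * real (card B')\<bar> \<le> 1 * Delta + \<epsilon> * n"
        using dev_bound(2)[of 1 A' B'] h half ne eps unfolding sq n_def by auto
      have "Delta \<le> \<epsilon> * n"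
      proof -
        have "4 * \<epsilon>^3 * N = \<epsilon> * (4 * \<epsilon>^2 * N)" by (simp add: power2_eq_square power3_eq_cube)
        also have "\<dots> \<le> \<epsilon> * n" using nge eps by (intro mult_left_mono) auto
        finally show ?thesis using small by linarith
      qed
      hence "\<bar>real (e_G E A' B') - d * n\<bar> \<le> (2 * \<epsilon>) * n" using db unfolding n_def by (simp add: mult.assoc)
      hence "\<bar>real (e_G E A' B') / n - d\<bar> \<le> 2 * \<epsilon>" by (rule absdiv[OF npos])
      thus "\<bar>d_G E A B - d_G E A' B'\<bar> \<le> 2 * \<epsilon>"
        unfolding dG_div[OF ne] n_def[symmetric] d_def[symmetric] by linarith
    qed
    thus ?thesis using EAB Delta_ge0 by (intro exI[of _ E]) auto
  next
    case big
    define \<eta> where "\<eta> = \<epsilon> / 2"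
    define \<theta> where "\<theta> = \<epsilon> / 4"
    have eta: "0 \<le> \<eta>" "\<eta> \<le> 1" using eps big unfolding \<eta>_def by auto
    have th: "0 \<le> \<theta>" using eps unfolding \<theta>_def by auto
    define M where "M = Pi_pmf (A \<times> B) False (\<lambda>p. bernoulli_pmf (q \<eta> p))"
    define h1 where "h1 = (\<lambda>(p::'a \<times> 'a) (b::bool). if b then 1::real else 0)"
    define h2 where "h2 = (\<lambda>(p::'a \<times> 'a) (b::bool). if b \<noteq> (p \<in> E) then 1::real else 0)"
    define F where "F = {(S, T). S \<subseteq> A \<and> T \<subseteq> B \<and> real (card S) \<ge> 2 * \<epsilon> * real (card A)
                               \<and> real (card T) \<ge> 2 * \<epsilon> * real (card B)}"
    define bad where "bad = (\<lambda>(S, T). {\<omega>. \<bar>(\<Sum>p\<in>S \<times> T. h1 p (\<omega> p)) - (\<Sum>p\<in>S \<times> T. h1 p True * q \<eta> p + h1 p False * (1 - q \<eta> p))\<bar>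
              \<ge> \<theta> * (real (card S) * real (card T))})"
    define badc where "badc = {\<omega>. (\<Sum>p\<in>A \<times> B. h2 p (\<omega> p)) \<ge> (\<Sum>p\<in>A \<times> B. h2 p True * q \<eta> p + h2 p False * (1 - q \<eta> p)) + \<eta> * Delta}"
    have finAB: "finite (A \<times> B)" using finA finB by simp
    have qpr: "\<forall>p\<in>A \<times> B. 0 \<le> q \<eta> p \<and> q \<eta> p \<le> 1" using q01[OF eta] by blast
    have FPow: "F \<subseteq> Pow A \<times> Pow B" unfolding F_def by auto
    have finF: "finite F" using finite_subset[OF FPow] finA finB by simp
    have cardF: "card F \<le> 2 ^ card A * 2 ^ card B"
    proof -
      have "card F \<le> card (Pow A \<times> Pow B)" using FPow finA finB by (intro card_mono) auto
      thus ?thesis using finA finB by (simp add: card_cartesian_product card_Pow)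
    qed
    have pbad: "measure_pmf.prob M (bad x) \<le> 2 * exp (- (\<epsilon>^4 * N / 2))" if x: "x \<in> F" for x
    proof -
      obtain S T where xST: "x = (S, T)" by (cases x)
      have h: "S \<subseteq> A" "T \<subseteq> B" "real (card S) \<ge> 2 * \<epsilon> * real (card A)" "real (card T) \<ge> 2 * \<epsilon> * real (card B)"
        using x unfolding xST F_def by auto
      have ne: "S \<noteq> {}" "T \<noteq> {}" using h neS neT by auto
      have fin: "finite S" "finite T" using h finA finB finite_subset by auto
      define n where "n = real (card S) * real (card T)"
      have cST: "real (card (S \<times> T)) = n" unfolding n_def by (simp add: card_cartesian_product)
      have npos: "n > 0" unfolding n_def using ne fin by (simp add: card_gt_0_iff)
      have nge: "n \<ge> 4 * \<epsilon>^2 * N" unfolding n_def N_def using h by (intro card_prod_ge) auto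
      have "measure_pmf.prob M (bad x) \<le> 2 * exp (-2 * (\<theta> * n)\<^sup>2 / real (card (S \<times> T)))"
        unfolding xST bad_def M_def n_def prod.case
        by (rule hoeff_generic(2)[OF finAB _ _ qpr]) (use h ne th npos in \<open>auto simp: h1_def n_def\<close>)
      also have "-2 * (\<theta> * n)\<^sup>2 / real (card (S \<times> T)) = - (2 * \<theta>^2 * n)"
        unfolding cST using npos by (simp add: power2_eq_square field_simps)
      also have "2 * exp (- (2 * \<theta>^2 * n)) \<le> 2 * exp (- (\<epsilon>^4 * N / 2))"
      proof -
        have "2 * \<theta>^2 * (4 * \<epsilon>^2 * N) \<le> 2 * \<theta>^2 * n" using nge by (intro mult_left_mono) auto
        moreover have "2 * \<theta>^2 * (4 * \<epsilon>^2 * N) = \<epsilon>^4 * N / 2" unfolding \<theta>_def by (simp add: power2_eq_square power4_eq_xxxx field_simps)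
        ultimately show ?thesis by simp
      qed
      finally show ?thesis .
    qed
    have pbadc: "measure_pmf.prob M badc \<le> exp (- (8 * \<epsilon>^8 * N))"
    proof -
      have cAB: "real (card (A \<times> B)) = N" unfolding N_def by (simp add: card_cartesian_product)
      have ABne: "A \<times> B \<noteq> {}" using cApos cBpos by auto
      have Dpos: "\<eta> * Delta \<ge> 0" using eta Delta_ge0 by simp
      have "measure_pmf.prob M badc \<le> exp (-2 * (\<eta> * Delta)\<^sup>2 / real (card (A \<times> B)))"
        unfolding badc_def M_def
        by (rule hoeff_generic(1)[OF finAB order.refl ABne qpr _ Dpos]) (auto simp: h2_def)
      also have "\<dots> \<le> exp (- (8 * \<epsilon>^8 * N))"
      proof -
        have "\<eta> * Delta \<ge> 2 * \<epsilon>^4 * N"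
        proof -
          have "\<eta> * Delta \<ge> \<eta> * (4 * \<epsilon>^3 * N)" using big eta by (intro mult_left_mono) auto
          moreover have "\<eta> * (4 * \<epsilon>^3 * N) = 2 * \<epsilon>^4 * N" unfolding \<eta>_def by (simp add: power_def field_simps)
          ultimately show ?thesis by simp
        qed
        moreover have "0 \<le> 2 * \<epsilon>^4 * N" using Npos by simp
        ultimately have "(2 * \<epsilon>^4 * N)\<^sup>2 \<le> (\<eta> * Delta)\<^sup>2" by (intro power_mono) auto
        hence "2 * (2 * \<epsilon>^4 * N)\<^sup>2 / N \<le> 2 * (\<eta> * Delta)\<^sup>2 / N" using Npos by (intro divide_right_mono) auto
        moreover have "2 * (2 * \<epsilon>^4 * N)\<^sup>2 / N = 8 * \<epsilon>^8 * N" using Npos by (simp add: power2_eq_square power_def field_simps)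
        ultimately show ?thesis unfolding cAB by simp
      qed
      finally show ?thesis .
    qed
    have union: "measure_pmf.prob M ((\<Union>x\<in>F. bad x) \<union> badc) \<le> (\<Sum>x\<in>F. measure_pmf.prob M (bad x)) + measure_pmf.prob M badc"
    proof -
      have "measure_pmf.prob M ((\<Union>x\<in>F. bad x) \<union> badc) \<le> measure_pmf.prob M (\<Union>x\<in>F. bad x) + measure_pmf.prob M badc"
        by (rule measure_Un_le) auto
      moreover have "measure_pmf.prob M (\<Union>x\<in>F. bad x) \<le> (\<Sum>x\<in>F. measure_pmf.prob M (bad x))"
        by (rule measure_pmf.finite_measure_subadditive_finite[OF finF]) auto
      ultimately show ?thesis by simp
    qed
    have "(\<Sum>x\<in>F. measure_pmf.prob M (bad x)) \<le> real (card F) * (2 * exp (- (\<epsilon>^4 * N / 2)))"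
      using pbad by (rule sum_bounded_above)
    also have "\<dots> \<le> real (2 ^ card A * 2 ^ card B) * (2 * exp (- (\<epsilon>^4 * N / 2)))"
      using cardF by (intro mult_right_mono) (auto simp del: of_nat_mult of_nat_power)
    finally have "measure_pmf.prob M ((\<Union>x\<in>F. bad x) \<union> badc)
        \<le> real (2 ^ card A * 2 ^ card B) * (2 * exp (- (\<epsilon>^4 * N / 2))) + exp (- (8 * \<epsilon>^8 * N))"
      using union pbadc by linarith
    also have "\<dots> < 1" unfolding N_def by (rule numeric[OF eps big(1) cA cB])
    finally obtain \<omega> where \<omega>: "\<omega> \<notin> (\<Union>x\<in>F. bad x) \<union> badc" using exists_good by blast
    define E' where "E' = {p \<in> A \<times> B. \<omega> p}"
    have e'eq: "real (e_G E' S T) = (\<Sum>p\<in>S \<times> T. h1 p (\<omega> p))" if "S \<subseteq> A" "T \<subseteq> B" for S T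
    proof -
      have fin: "finite (S \<times> T)" using that finA finB finite_subset by blast
      have "{p \<in> S \<times> T. p \<in> E'} = {p \<in> S \<times> T. \<omega> p}" using that unfolding E'_def by auto
      thus ?thesis unfolding e_G_def h1_def using sum_ind[OF fin, of "\<lambda>p. \<omega> p"] by simp
    qed
    have expq: "(\<Sum>p\<in>S \<times> T. h1 p True * q \<eta> p + h1 p False * (1 - q \<eta> p)) = (\<Sum>p\<in>S \<times> T. q \<eta> p)" for S T
      unfolding h1_def by simp
    have goodST: "\<bar>real (e_G E' S T) - (\<Sum>p\<in>S \<times> T. q \<eta> p)\<bar> < \<theta> * (real (card S) * real (card T))"
      if "(S, T) \<in> F" for S T
    proof -
      have "\<omega> \<notin> bad (S, T)" using \<omega> that by blast
      moreover have "S \<subseteq> A" "T \<subseteq> B" using that unfolding F_def by auto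
      ultimately show ?thesis unfolding bad_def using e'eq expq by auto
    qed
    have cost: "real (card ((E - E') \<union> (E' - E))) < Delta"
    proof -
      have fin: "finite (A \<times> B)" by (rule finAB)
      have "(E - E') \<union> (E' - E) = {p \<in> A \<times> B. \<omega> p \<noteq> (p \<in> E)}" using EAB unfolding E'_def by auto
      hence "real (card ((E - E') \<union> (E' - E))) = (\<Sum>p\<in>A \<times> B. h2 p (\<omega> p))"
        unfolding h2_def using sum_ind[OF fin, of "\<lambda>p. \<omega> p \<noteq> (p \<in> E)"] by simp
      moreover have "\<omega> \<notin> badc" using \<omega> by blast
      moreover have "(\<Sum>p\<in>A \<times> B. h2 p True * q \<eta> p + h2 p False * (1 - q \<eta> p)) = (1 - \<eta>) * Delta"
        unfolding h2_def using cost_exp[OF eta] by simp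
      ultimately show ?thesis unfolding badc_def by (simp add: algebra_simps)
    qed
    have ABF: "(A, B) \<in> F" unfolding F_def using big cApos cBpos by auto
    have dAB: "\<bar>d_G E' A B - d\<bar> \<le> \<theta>"
    proof -
      have ne: "A \<noteq> {}" "B \<noteq> {}" using cApos cBpos by auto
      have "\<bar>real (e_G E' A B) - d * N\<bar> \<le> \<theta> * N"
        using goodST[OF ABF] exactAB[OF eta] unfolding N_def by (simp add: mult.assoc)
      hence "\<bar>real (e_G E' A B) / N - d\<bar> \<le> \<theta>" by (rule absdiv[OF Npos])
      thus ?thesis unfolding dG_div[OF ne] N_def .
    qed
    have "eps_regular E' (2 * \<epsilon>) A B"
      unfolding eps_regular_def
    proof (intro allI impI)
      fix A' B'
      assume h: "A' \<subseteq> A \<and> B' \<subseteq> B \<and> 2 * \<epsilon> * real (card A) \<le> real (card A') \<and> 2 * \<epsilon> * real (card B) \<le> real (card B')"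
      have inF: "(A', B') \<in> F" using h unfolding F_def by auto
      have ne: "A' \<noteq> {}" "B' \<noteq> {}" using h neS neT by auto
      have fin: "finite A'" "finite B'" using h finA finB finite_subset by auto
      define n where "n = real (card A') * real (card B')"
      have npos: "n > 0" unfolding n_def using ne fin by (simp add: card_gt_0_iff)
      have db: "\<bar>(\<Sum>p\<in>A' \<times> B'. q \<eta> p) - d * real (card A') * real (card B')\<bar> \<le> (\<eta> + \<epsilon>) * n"
        using dev_bound(1)[OF eta, of A' B'] h half ne unfolding n_def by auto
      have g: "\<bar>real (e_G E' A' B') - (\<Sum>p\<in>A' \<times> B'. q \<eta> p)\<bar> < \<theta> * n"
        using goodST[OF inF] unfolding n_def .
      have "\<bar>real (e_G E' A' B') - d * n\<bar> \<le> (\<theta> + \<eta> + \<epsilon>) * n"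
        using db g unfolding n_def by (simp add: algebra_simps abs_le_iff abs_less_iff) linarith?
      hence "\<bar>real (e_G E' A' B') / n - d\<bar> \<le> \<theta> + \<eta> + \<epsilon>" by (rule absdiv[OF npos])
      hence "\<bar>d_G E' A' B' - d\<bar> \<le> \<theta> + \<eta> + \<epsilon>" unfolding dG_div[OF ne] n_def .
      thus "\<bar>d_G E' A B - d_G E' A' B'\<bar> \<le> 2 * \<epsilon>" using dAB unfolding \<theta>_def \<eta>_def by linarith
    qed
    moreover have "E' \<subseteq> A \<times> B" unfolding E'_def by auto
    ultimately show ?thesis using cost by (intro exI[of _ E']) auto
  qed
qed

end

theorem lemma2p3:
  fixes E :: "('a \<times> 'a) set" and A B :: "'a set" and \<A> \<B> :: "'a set set" and \<epsilon> :: real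
  assumes "finite A" and "finite B" and "A \<inter> B = {}"
    and "E \<subseteq> A \<times> B"
    and "partition_on A \<A>" and "partition_on B \<B>"
    and "0 < \<epsilon>"
    and "weak_regular E \<epsilon> A B \<A> \<B>"
    and "real (card A) \<ge> 8 / \<epsilon> ^ 4" and "real (card B) \<ge> 8 / \<epsilon> ^ 4"
  shows "\<exists>E'. E' \<subseteq> A \<times> B \<and> eps_regular E' (2 * \<epsilon>) A B
     \<and> real (card ((E - E') \<union> (E' - E)))
         \<le> (\<Sum>Ai\<in>\<A>. \<Sum>Bj\<in>\<B>. \<bar>d_G E Ai Bj - d_G E A B\<bar> * real (card Ai) * real (card Bj))"
  proof -
  interpret setting E A B \<A> \<B> \<epsilon> using assms by unfold_locales auto
  show ?thesis using main[OF assms(9) assms(10)] unfolding Delta_def .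
qed

end
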